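(* Let $X$ be a real Banach space and $M\subseteq X$ a topologically linearly independent set such that $M\cup\{0_X\}$ is a free basis of $X$. Let $N=\{m/\|m\| : m\in M\}$. Then there is an isomorphism of Banach spaces (bounded linear bijection with bounded inverse) $\phi\colon X\to\ell^1(N)$ with $\phi(n)=e_n$ for every $n\in N$, where $e_n$ is the indicator of $\{n\}$. In particular, $M$ is a (long) Schauder basis of $X$.
   Context: A subset $A\subseteq X\setminus\{0\}$ of a topological vector space $X$ is topologically linearly independent if for every neighborhood $W$ of $0$ there is a neighborhood $U$ of $0$ such that for every finite $F\subseteq A$ and reals $\{r_a: a\in F\}$, $\sum_{a\in F}r_a a\in U$ implies $r_a a\in W$ for all $a\in F$. A free basis of a Banach space $X$ is a closed subset $N_0\subseteq X$ containing $0_X$ such that for every Banach space $Y$ and every Lipschitz map $f\colon N_0\to Y$ with $f(0_X)=0_Y$ there is a unique bounded linear map $\hat f\colon X\to Y$ extending $f$. For a set $N$, $\ell^1(N)$ is the Banach space of all $x=(x_n)_{n\in N}$ with $\|x\|=\sum_{n\in N}|x_n|<\infty$ (so only countably many $x_n$ are nonzero). *)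

theory Defs
  imports "HOL-Analysis.Analysis" "HOL-Probability.Discrete_Topology"
begin

text \<open>Topological linear independence of a subset A of X (neighbourhoods of 0 are
  taken to be open sets containing 0; this is equivalent to general neighbourhoods).\<close>
definition top_lin_indep :: "'a::real_normed_vector set \<Rightarrow> bool" where
  "top_lin_indep A \<longleftrightarrow> A \<subseteq> UNIV - {0} \<and>
     (\<forall>W. open W \<and> 0 \<in> W \<longrightarrow>
        (\<exists>U. open U \<and> 0 \<in> U \<and>
           (\<forall>F r. finite F \<and> F \<subseteq> A \<and> (\<Sum>a\<in>F. r a *\<^sub>R a) \<in> U \<longrightarrow>
                  (\<forall>a\<in>F. r a *\<^sub>R a \<in> W))))"

definition free_basis_wrt :: "'b::banach itself \<Rightarrow> 'a::banach set \<Rightarrow> bool" where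
  "free_basis_wrt _ N0 \<longleftrightarrow> closed N0 \<and> 0 \<in> N0 \<and>
     (\<forall>f :: 'a \<Rightarrow> 'b. (\<exists>C. C-lipschitz_on N0 f) \<and> f 0 = 0 \<longrightarrow>
        (\<exists>!T :: 'a \<Rightarrow> 'b. bounded_linear T \<and> (\<forall>x\<in>N0. T x = f x)))"

text \<open>ell^1(N), represented as real functions on the ambient type vanishing outside N
  with absolutely summable values on N; norm = sum of absolute values.\<close>
definition ell1 :: "'a set \<Rightarrow> ('a \<Rightarrow> real) set" where
  "ell1 N = {x. (\<forall>n. n \<notin> N \<longrightarrow> x n = 0) \<and> (\<lambda>n. \<bar>x n\<bar>) summable_on N}"

definition ell1_norm :: "'a set \<Rightarrow> ('a \<Rightarrow> real) \<Rightarrow> real" where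
  "ell1_norm N x = (\<Sum>\<^sub>\<infinity>n\<in>N. \<bar>x n\<bar>)"

instance bcontfun :: (metric_space, banach) banach ..

text \<open>Universal target: ell^infinity over the carrier of X (bounded functions on a discrete copy).\<close>
type_synonym 'a linf = "'a discrete \<Rightarrow>\<^sub>C real"

end

theory Submission
  imports Defs
begin


lemma tli_bound:
  assumes "top_lin_indep M"
  obtains e where "e > 0" "\<And>F r a. finite F \<Longrightarrow> F \<subseteq> M \<Longrightarrow> norm (\<Sum>a\<in>F. r a *\<^sub>R a) < e \<Longrightarrow> a \<in> F \<Longrightarrow> norm (r a *\<^sub>R a) < 1"
proof -
  have H: "\<forall>W. open W \<and> 0 \<in> W \<longrightarrow>
        (\<exists>U. open U \<and> 0 \<in> U \<and>
           (\<forall>F r. finite F \<and> F \<subseteq> M \<and> (\<Sum>a\<in>F. r a *\<^sub>R a) \<in> U \<longrightarrow>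
                  (\<forall>a\<in>F. r a *\<^sub>R a \<in> W)))" using assms unfolding top_lin_indep_def by (rule conjunct2)
  have "\<exists>U. open U \<and> 0 \<in> U \<and>
           (\<forall>F r. finite F \<and> F \<subseteq> M \<and> (\<Sum>a\<in>F. r a *\<^sub>R a) \<in> U \<longrightarrow>
                  (\<forall>a\<in>F. r a *\<^sub>R a \<in> ball 0 1))" by (rule mp[OF spec[OF H, of "ball 0 1"]]) auto
  then obtain U where U: "open U" "0 \<in> U"
    "\<forall>F r. finite F \<and> F \<subseteq> M \<and> (\<Sum>a\<in>F. r a *\<^sub>R a) \<in> U \<longrightarrow> (\<forall>a\<in>F. r a *\<^sub>R a \<in> ball 0 1)"
    by (elim exE conjE)
  obtain e where e: "e > 0" "ball 0 e \<subseteq> U" using U(1,2) open_contains_ball by blast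
  show ?thesis
  proof (rule that[OF e(1)])
    fix F r a assume F: "finite F" "F \<subseteq> M" "norm (\<Sum>a\<in>F. r a *\<^sub>R a) < e" "a \<in> F"
    then have "(\<Sum>a\<in>F. r a *\<^sub>R a) \<in> U" using e by auto
    then have "finite F \<and> F \<subseteq> M \<and> (\<Sum>a\<in>F. r a *\<^sub>R a) \<in> U" using F(1,2) by (intro conjI)
    from mp[OF spec[OF spec[OF U(3), of F], of r] this] have "\<forall>a\<in>F. r a *\<^sub>R a \<in> ball 0 1" .
    then show "norm (r a *\<^sub>R a) < 1" using F(4) by simp
  qed
qed

lemma tli_sep:
  assumes "top_lin_indep M"
  obtains d where "d > 0" "d \<le> 1" "\<And>a b. a \<in> M \<Longrightarrow> b \<in> M \<union> {0} \<Longrightarrow> a \<noteq> b \<Longrightarrow> d * norm a \<le> norm (a - b)"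
proof -
  show ?thesis
  proof (rule tli_bound[OF assms])
  fix e assume e: "e > 0" and E: "\<And>F r a. finite F \<Longrightarrow> F \<subseteq> M \<Longrightarrow> norm (\<Sum>a\<in>F. r a *\<^sub>R a) < e \<Longrightarrow> a \<in> F \<Longrightarrow> norm (r a *\<^sub>R a) < 1"
  define d where "d = min 1 (e/2)"
  have d: "d > 0" "d \<le> 1" using e by (auto simp: d_def)
  show ?thesis
  proof (rule that[OF d])
    fix a b assume a: "a \<in> M" and b: "b \<in> M \<union> {0}" "a \<noteq> b"
    show "d * norm a \<le> norm (a - b)"
    proof (cases "b = 0")
      case True then show ?thesis using mult_right_mono[OF \<open>d \<le> 1\<close> norm_ge_zero[of a]] by simp
    next
      case False
      then have bM: "b \<in> M" using b by auto
      define t where "t = norm (a - b)"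
      have t: "t > 0" using b by (simp add: t_def)
      define s where "s = (e/2) / t"
      have s: "s > 0" using t e by (simp add: s_def)
      define r where "r = (\<lambda>x. if x = a then s else - s)"
      have "(\<Sum>x\<in>{a,b}. r x *\<^sub>R x) = s *\<^sub>R (a - b)" using b by (simp add: r_def algebra_simps)
      moreover have "norm (s *\<^sub>R (a - b)) = e/2" using t s e by (simp add: s_def t_def)
      ultimately have "norm (\<Sum>x\<in>{a,b}. r x *\<^sub>R x) < e" using e by simp
      from E[OF _ _ this] a bM have "norm (r a *\<^sub>R a) < 1" by auto
      then have "s * norm a < 1" using s by (simp add: r_def)
      then have "(e/2) * norm a < t" using t by (simp add: s_def field_simps)
      moreover have "d * norm a \<le> (e/2) * norm a" by (rule mult_right_mono) (auto simp: d_def)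
      ultimately show ?thesis by (simp add: t_def)
    qed
  qed
  qed
qed

lemma fb_unique:
  fixes T1 T2 :: "'a::banach \<Rightarrow> 'b::banach"
  assumes "free_basis_wrt TYPE('b) S" "bounded_linear T1" "bounded_linear T2" "\<And>x. x \<in> S \<Longrightarrow> T1 x = T2 x"
  shows "T1 = T2"
proof -
  obtain K where K: "K > 0" "\<And>x. norm (T1 x) \<le> norm x * K" using bounded_linear.pos_bounded[OF assms(2)] by blast
  have "K-lipschitz_on S T1"
  proof (rule lipschitz_onI)
    fix x y assume "x \<in> S" "y \<in> S"
    have "dist (T1 x) (T1 y) = norm (T1 (x - y))" by (simp add: dist_norm linear_diff[OF bounded_linear.linear[OF assms(2)]])
    also have "\<dots> \<le> K * dist x y" using K(2)[of "x - y"] by (simp add: dist_norm mult.commute)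
    finally show "dist (T1 x) (T1 y) \<le> K * dist x y" .
  qed (use K in auto)
  moreover have "T1 0 = 0" using assms(2) linear_0 bounded_linear.linear by blast
  ultimately have "\<exists>!T :: 'a \<Rightarrow> 'b. bounded_linear T \<and> (\<forall>x\<in>S. T x = T1 x)"
    using assms(1) unfolding free_basis_wrt_def by blast
  then have "\<And>T T'. bounded_linear T \<and> (\<forall>x\<in>S. T x = T1 x) \<Longrightarrow> bounded_linear T' \<and> (\<forall>x\<in>S. T' x = T1 x) \<Longrightarrow> T = T'"
    using ex1_iff_ex_Uniq Uniq_D by metis
  then show ?thesis using assms(2,3,4) by force
qed

lemma fb_ext:
  fixes f :: "'a::banach \<Rightarrow> 'b::banach"
  assumes "free_basis_wrt TYPE('b) S" "C-lipschitz_on S f" "f 0 = 0"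
  shows "\<exists>T. bounded_linear T \<and> (\<forall>x\<in>S. T x = f x)"
  using assms unfolding free_basis_wrt_def by blast



lemma disc_bcontfun:
  fixes h :: "'a \<Rightarrow> real"
  assumes "\<And>z. \<bar>h z\<bar> \<le> B"
  shows "apply_bcontfun (Bcontfun (\<lambda>p::'a discrete. h (of_discrete p))) = (\<lambda>p. h (of_discrete p))"
proof (rule Bcontfun_inverse, rule bcontfun_normI)
  show "continuous_on UNIV (\<lambda>p::'a discrete. h (of_discrete p))"
    unfolding continuous_on_open_invariant
  proof (intro allI impI)
    fix B :: "real set" assume "open B"
    show "\<exists>A. open A \<and> A \<inter> UNIV = (\<lambda>p::'a discrete. h (of_discrete p)) -` B \<inter> UNIV"
      by (rule exI[of _ "(\<lambda>p::'a discrete. h (of_discrete p)) -` B"]) (simp add: open_discrete)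
  qed
qed (use assms in auto)

theorem theorem4p9:
  fixes M :: "'a::banach set"
  assumes tli: "top_lin_indep M"
    and fb_real: "free_basis_wrt TYPE(real) (M \<union> {0})"
    and fb_self: "free_basis_wrt TYPE('a) (M \<union> {0})"
    and fb_linf: "free_basis_wrt TYPE('a linf) (M \<union> {0})"
  defines "N \<equiv> (\<lambda>m. (1 / norm m) *\<^sub>R m) ` M"
  shows "\<exists>\<phi> :: 'a \<Rightarrow> ('a \<Rightarrow> real).
           bij_betw \<phi> UNIV (ell1 N)
         \<and> (\<forall>x y. \<phi> (x + y) = (\<lambda>n. \<phi> x n + \<phi> y n))
         \<and> (\<forall>c x. \<phi> (c *\<^sub>R x) = (\<lambda>n. c * \<phi> x n))
         \<and> (\<exists>C. \<forall>x. ell1_norm N (\<phi> x) \<le> C * norm x)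
         \<and> (\<exists>C. \<forall>x. norm x \<le> C * ell1_norm N (\<phi> x))
         \<and> (\<forall>n\<in>N. \<phi> n = indicator {n})"
proof -
  define S where "S = M \<union> {0}"
  define nrm :: "'a \<Rightarrow> 'a" where "nrm = (\<lambda>m. (1 / norm m) *\<^sub>R m)"
  have N_def': "N = nrm ` M" by (simp add: N_def nrm_def)
  have M0: "0 \<notin> M" using tli by (auto simp: top_lin_indep_def)
  obtain d where d: "d > 0" "d \<le> 1" and sep0: "\<And>a b. a \<in> M \<Longrightarrow> b \<in> M \<union> {0} \<Longrightarrow> a \<noteq> b \<Longrightarrow> d * norm a \<le> norm (a - b)"
    by (rule tli_sep[OF tli], rule that)
  have sep: "\<And>a b. a \<in> M \<Longrightarrow> b \<in> S \<Longrightarrow> a \<noteq> b \<Longrightarrow> d * norm a \<le> norm (a - b)"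
    using sep0 unfolding S_def .
  have sep2: "norm a + norm b \<le> (2/d) * norm (a - b)" if "a \<in> S" "b \<in> S" "a \<noteq> b" for a b
  proof -
    have 1: "norm a \<le> norm (a - b) / d"
    proof (cases "a = 0")
      case False then show ?thesis using sep[of a b] that \<open>a \<noteq> b\<close> d by (auto simp: S_def field_simps)
    qed (use d in auto)
    have 2: "norm b \<le> norm (a - b) / d"
    proof (cases "b = 0")
      case False then show ?thesis using sep[of b a] that \<open>a \<noteq> b\<close> d by (auto simp: S_def field_simps norm_minus_commute)
    qed (use d in auto)
    show ?thesis using 1 2 by (simp add: field_simps)
  qed
  have nrm_norm: "norm (nrm m) = 1" if "m \<in> M" for m using that M0 by (auto simp: nrm_def)
  define g where "g = (\<lambda>n x. if x \<in> M \<and> nrm x = n then norm x else (0::real))"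
  have g_lip: "(1/d)-lipschitz_on S (g n)" for n
  proof (rule lipschitz_onI)
    fix a b assume ab: "a \<in> S" "b \<in> S"
    have "dist (g n a) (g n b) \<le> norm a + norm b" by (auto simp: g_def dist_real_def abs_le_iff)
    moreover have "dist (g n a) (g n b) \<le> dist a b" if "a \<in> M \<and> nrm a = n" "b \<in> M \<and> nrm b = n"
      using that by (auto simp: g_def dist_real_def dist_norm norm_triangle_ineq3)
    moreover have "dist (g n a) (g n b) \<le> norm a" if "a \<in> M \<and> nrm a = n" "\<not> (b \<in> M \<and> nrm b = n)"
      using that by (auto simp: g_def dist_real_def)
    moreover have "dist (g n a) (g n b) \<le> norm b" if "\<not> (a \<in> M \<and> nrm a = n)" "b \<in> M \<and> nrm b = n"
      using that by (auto simp: g_def dist_real_def)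
    moreover have "dist (g n a) (g n b) = 0" if "\<not> (a \<in> M \<and> nrm a = n)" "\<not> (b \<in> M \<and> nrm b = n)"
      using that by (auto simp: g_def dist_real_def)
    moreover have "norm a \<le> (1/d) * dist a b" if "a \<in> M" "a \<noteq> b"
      using sep[of a b] that ab d by (auto simp: dist_norm field_simps)
    moreover have "norm b \<le> (1/d) * dist a b" if "b \<in> M" "a \<noteq> b"
      using sep[of b a] that ab d by (auto simp: dist_norm field_simps norm_minus_commute)
    moreover have "dist a b \<le> (1/d) * dist a b" using d by (simp add: field_simps mult_left_le_one_le)
    ultimately show "dist (g n a) (g n b) \<le> 1 / d * dist a b"
      by (smt (verit) dist_eq_0_iff zero_le_dist)
  qed (use d in auto)
  have "\<forall>n. \<exists>T. bounded_linear T \<and> (\<forall>x\<in>S. T x = g n x)"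
  proof
    fix n
    have "g n 0 = 0" using M0 by (simp add: g_def)
    then show "\<exists>T. bounded_linear T \<and> (\<forall>x\<in>S. T x = g n x)"
      using fb_ext[OF fb_real[folded S_def] g_lip] by blast
  qed
  then obtain c :: "'a \<Rightarrow> 'a \<Rightarrow> real" where c: "\<forall>n. bounded_linear (c n) \<and> (\<forall>x\<in>S. c n x = g n x)"
    by (rule exE[OF choice])
  have c_bl: "\<And>n. bounded_linear (c n)" and c_S: "\<And>n x. x \<in> S \<Longrightarrow> c n x = g n x"
    using c by auto
  have c_lin: "\<And>n. linear (c n)" using c_bl bounded_linear.linear by blast
  have c_M: "c n m = (if nrm m = n then norm m else 0)" if "m \<in> M" for n m
    using c_S[of m n] that by (simp add: S_def g_def)
  have c_N: "c n n' = (if n' = n then 1 else 0)" if n'N: "n' \<in> N" for n n'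
  proof -
    obtain m where m: "m \<in> M" "n' = nrm m" using n'N N_def' by blast
    have "m \<noteq> 0" using m M0 by auto
    have "c n n' = (1 / norm m) * c n m" using m linear_scale[OF c_lin] by (simp add: nrm_def)
    then show ?thesis using m c_M[of m n] \<open>m \<noteq> 0\<close> by simp
  qed
  define h where "h = (\<lambda>x z. if x \<in> M then sgn (c (nrm x) z) * norm x else (0::real))"
  have h_bd: "\<bar>h x z\<bar> \<le> norm x" for x z
    by (auto simp: h_def abs_mult abs_sgn_eq)
  define F :: "'a \<Rightarrow> 'a linf" where "F = (\<lambda>x. Bcontfun (\<lambda>p. h x (of_discrete p)))"
  have F_app: "apply_bcontfun (F x) p = h x (of_discrete p)" for x p
    unfolding F_def by (subst disc_bcontfun[OF h_bd]) simp
  have F_lip: "(2/d)-lipschitz_on S F"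
  proof (rule lipschitz_onI)
    fix a b assume ab: "a \<in> S" "b \<in> S"
    show "dist (F a) (F b) \<le> 2 / d * dist a b"
    proof (cases "a = b")
      case False
      show ?thesis
      proof (rule dist_bound)
        fix p
        have "dist (F a p) (F b p) \<le> \<bar>h a (of_discrete p)\<bar> + \<bar>h b (of_discrete p)\<bar>"
          by (simp add: F_app dist_real_def)
        also have "\<dots> \<le> norm a + norm b" using h_bd by (intro add_mono)
        also have "\<dots> \<le> 2 / d * dist a b" using sep2[OF ab False] by (simp add: dist_norm)
        finally show "dist (F a p) (F b p) \<le> 2 / d * dist a b" .
      qed
    qed simp
  qed (use d in auto)
  have F0: "F 0 = 0"
    by (rule bcontfun_eqI) (simp add: F_app h_def M0)
  obtain T where T_bl: "bounded_linear T" and T_S: "\<And>x. x \<in> S \<Longrightarrow> T x = F x"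
    using fb_ext[OF fb_linf[folded S_def] F_lip F0] by blast
  obtain K where K: "K > 0" "\<And>x. norm (T x) \<le> norm x * K"
    using bounded_linear.pos_bounded[OF T_bl] by blast
  have T_lin: "linear T" using T_bl bounded_linear.linear by blast
  have key: "(\<Sum>n\<in>G. \<bar>c n x\<bar>) \<le> K * norm x" if G: "finite G" "G \<subseteq> N" for G x
  proof -
    define z where "z = (\<Sum>n\<in>G. sgn (c n x) *\<^sub>R n)"
    have cz: "c n' z = (if n' \<in> G then sgn (c n' x) else 0)" for n'
    proof -
      have "c n' z = (\<Sum>n\<in>G. sgn (c n x) * c n' n)"
        unfolding z_def by (simp add: linear_sum[OF c_lin] linear_scale[OF c_lin])
      also have "\<dots> = (\<Sum>n\<in>G. if n = n' then sgn (c n x) else 0)"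
        by (rule sum.cong) (use G c_N in auto)
      also have "\<dots> = (if n' \<in> G then sgn (c n' x) else 0)"
        using G(1) by (simp add: sum.delta')
      finally show ?thesis .
    qed
    define E where "E = (\<lambda>y. apply_bcontfun (T y) (discrete z))"
    define E2 where "E2 = (\<lambda>y. \<Sum>n\<in>G. sgn (c n x) * c n y)"
    have E_bl: "bounded_linear E"
    proof (rule bounded_linear_intro[where K=K])
      fix y y' show "E (y + y') = E y + E y'"
        by (simp add: E_def linear_add[OF T_lin])
    next
      fix r y show "E (r *\<^sub>R y) = r *\<^sub>R E y"
        by (simp add: E_def linear_scale[OF T_lin])
    next
      fix y show "norm (E y) \<le> norm y * K"
        unfolding E_def using norm_bounded[of "T y" "discrete z"] K(2)[of y] by linarith
    qed
    have E2_bl: "bounded_linear E2"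
      unfolding E2_def by (intro bounded_linear_sum bounded_linear_const_mult c_bl)
    have "E = E2"
    proof (rule fb_unique[OF fb_real[folded S_def] E_bl E2_bl])
      fix y assume y: "y \<in> S"
      show "E y = E2 y"
      proof (cases "y = 0")
        case True
        then show ?thesis using bounded_linear.linear[OF E_bl] bounded_linear.linear[OF E2_bl]
          by (simp add: linear_0)
      next
        case False
        then have yM: "y \<in> M" using y by (auto simp: S_def)
        have "E y = sgn (c (nrm y) z) * norm y"
          using T_S[OF y] yM by (simp add: E_def F_app h_def discrete_inverse)
        also have "\<dots> = (if nrm y \<in> G then sgn (c (nrm y) x) * norm y else 0)"
          by (simp add: cz)
        also have "\<dots> = E2 y"
        proof -
          have "E2 y = (\<Sum>n\<in>G. if n = nrm y then sgn (c n x) * norm y else 0)"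
            unfolding E2_def by (rule sum.cong) (auto simp: c_M[OF yM])
          also have "\<dots> = (if nrm y \<in> G then sgn (c (nrm y) x) * norm y else 0)"
            using G(1) by (simp add: sum.delta')
          finally show ?thesis by simp
        qed
        finally show ?thesis .
      qed
    qed
    then have "E x = (\<Sum>n\<in>G. \<bar>c n x\<bar>)"
      by (simp add: E2_def abs_sgn mult.commute)
    moreover have "\<bar>E x\<bar> \<le> K * norm x"
      unfolding E_def using norm_bounded[of "T x" "discrete z"] K(2)[of x] by (simp add: mult.commute)
    ultimately show ?thesis by simp
  qed
  have absN: "(\<lambda>n. \<bar>c n x\<bar>) summable_on N" for x
  proof (rule nonneg_bdd_above_summable_on)
    show "bdd_above (sum (\<lambda>n. \<bar>c n x\<bar>) ` {F. F \<subseteq> N \<and> finite F})"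
      by (rule bdd_aboveI[of _ "K * norm x"]) (auto intro: key)
  qed simp
  have infN: "(\<Sum>\<^sub>\<infinity>n\<in>N. \<bar>c n x\<bar>) \<le> K * norm x" for x
    by (rule infsum_le_finite_sums[OF absN]) (rule key)
  have normN: "\<And>n. n \<in> N \<Longrightarrow> norm n = 1" using nrm_norm N_def' by auto
  define Q where "Q = (\<lambda>a::'a\<Rightarrow>real. \<Sum>\<^sub>\<infinity>n\<in>N. a n *\<^sub>R n)"
  have abs_a: "(\<lambda>n. a n *\<^sub>R n) abs_summable_on N" if "(\<lambda>n. \<bar>a n\<bar>) summable_on N" for a
  proof -
    have "(\<lambda>n. norm (a n *\<^sub>R n)) summable_on N \<longleftrightarrow> (\<lambda>n. \<bar>a n\<bar>) summable_on N"
      by (rule summable_on_cong) (simp add: normN)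
    then show ?thesis using that by simp
  qed
  have Qbound: "norm (Q a) \<le> (\<Sum>\<^sub>\<infinity>n\<in>N. \<bar>a n\<bar>)" if "(\<lambda>n. \<bar>a n\<bar>) summable_on N" for a
  proof -
    have "norm (Q a) \<le> (\<Sum>\<^sub>\<infinity>n\<in>N. norm (a n *\<^sub>R n))"
      unfolding Q_def by (rule norm_infsum_bound[OF abs_a[OF that]])
    also have "\<dots> = (\<Sum>\<^sub>\<infinity>n\<in>N. \<bar>a n\<bar>)"
      by (rule infsum_cong) (simp add: normN)
    finally show ?thesis .
  qed
  have Qsumm: "(\<lambda>n. a n *\<^sub>R n) summable_on N" if "(\<lambda>n. \<bar>a n\<bar>) summable_on N" for a
    using abs_summable_summable[OF abs_a[OF that]] .
  have Qsum: "((\<lambda>n. a n *\<^sub>R n) has_sum Q a) N" if "(\<lambda>n. \<bar>a n\<bar>) summable_on N" for a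
    unfolding Q_def using Qsumm[OF that] by (rule has_sum_infsum)
  define P where "P = (\<lambda>x. Q (\<lambda>n. c n x))"
  have P_bl: "bounded_linear P"
  proof (rule bounded_linear_intro[where K=K])
    fix x y
    have "P (x + y) = (\<Sum>\<^sub>\<infinity>n\<in>N. c n x *\<^sub>R n + c n y *\<^sub>R n)"
      unfolding P_def Q_def by (simp add: linear_add[OF c_lin] scaleR_add_left)
    also have "\<dots> = P x + P y"
      unfolding P_def Q_def by (rule infsum_add[OF Qsumm[OF absN] Qsumm[OF absN]])
    finally show "P (x + y) = P x + P y" .
  next
    fix r x
    have "P (r *\<^sub>R x) = (\<Sum>\<^sub>\<infinity>n\<in>N. r *\<^sub>R (c n x *\<^sub>R n))"
      unfolding P_def Q_def by (simp add: linear_scale[OF c_lin])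
    also have "\<dots> = r *\<^sub>R P x"
      unfolding P_def Q_def by (rule infsum_scaleR_right)
    finally show "P (r *\<^sub>R x) = r *\<^sub>R P x" .
  next
    fix x
    show "norm (P x) \<le> norm x * K"
      unfolding P_def using Qbound[OF absN[of x]] infN[of x] by (simp add: mult.commute)
  qed
  have P_S: "P x = x" if "x \<in> S" for x
  proof (cases "x = 0")
    case True then show ?thesis using linear_0[OF bounded_linear.linear[OF P_bl]] by simp
  next
    case False
    then have xM: "x \<in> M" using that by (auto simp: S_def)
    have nxN: "nrm x \<in> N" using xM N_def' by auto
    have "P x = (\<Sum>\<^sub>\<infinity>n\<in>{nrm x}. c n x *\<^sub>R n)"
      unfolding P_def Q_def
      by (rule infsum_cong_neutral) (use nxN in \<open>auto simp: c_M[OF xM]\<close>)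
    also have "\<dots> = norm x *\<^sub>R nrm x" by (simp add: c_M[OF xM])
    also have "\<dots> = x" using False by (simp add: nrm_def)
    finally show ?thesis .
  qed
  have P_id: "P = (\<lambda>x. x)"
    by (rule fb_unique[OF fb_self[folded S_def] P_bl bounded_linear_ident]) (rule P_S)
  define \<phi> where "\<phi> = (\<lambda>x n. if n \<in> N then c n x else 0)"
  have Q\<phi>: "Q (\<phi> x) = x" for x
  proof -
    have "Q (\<phi> x) = P x" unfolding P_def Q_def \<phi>_def by (rule infsum_cong) simp
    then show ?thesis using P_id by simp
  qed
  have \<phi>_summ: "(\<lambda>n. \<bar>\<phi> x n\<bar>) summable_on N" for x
  proof -
    have "(\<lambda>n. \<bar>\<phi> x n\<bar>) summable_on N \<longleftrightarrow> (\<lambda>n. \<bar>c n x\<bar>) summable_on N"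
      by (rule summable_on_cong) (simp add: \<phi>_def)
    then show ?thesis using absN by simp
  qed
  have \<phi>_norm: "ell1_norm N (\<phi> x) = (\<Sum>\<^sub>\<infinity>n\<in>N. \<bar>c n x\<bar>)" for x
  proof -
    have "\<And>n. n \<in> N \<Longrightarrow> \<bar>\<phi> x n\<bar> = \<bar>c n x\<bar>" by (simp add: \<phi>_def)
    then show ?thesis unfolding ell1_norm_def by (rule infsum_cong)
  qed
  have bij: "bij_betw \<phi> UNIV (ell1 N)"
  proof (rule bij_betw_imageI)
    show "inj_on \<phi> UNIV"
    proof (rule inj_onI)
      fix x y assume xy: "\<phi> x = \<phi> y"
      have "x = Q (\<phi> x)" by (rule Q\<phi>[symmetric])
      also have "\<dots> = Q (\<phi> y)" by (simp only: xy)
      also have "\<dots> = y" by (rule Q\<phi>)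
      finally show "x = y" .
    qed
  next
    show "range \<phi> = ell1 N"
    proof
      show "range \<phi> \<subseteq> ell1 N"
      proof (rule image_subsetI)
        fix x
        have "\<forall>n. n \<notin> N \<longrightarrow> \<phi> x n = 0" by (simp add: \<phi>_def)
        then show "\<phi> x \<in> ell1 N" unfolding ell1_def using \<phi>_summ[of x] by blast
      qed
    next
      show "ell1 N \<subseteq> range \<phi>"
      proof
        fix a assume a: "a \<in> ell1 N"
        then have a0: "\<And>n. n \<notin> N \<Longrightarrow> a n = 0" and asum: "(\<lambda>n. \<bar>a n\<bar>) summable_on N"
          by (auto simp: ell1_def)
        have "c n (Q a) = a n" if nN: "n \<in> N" for n
        proof -
          have "((\<lambda>n'. c n (a n' *\<^sub>R n')) has_sum c n (Q a)) N"
            by (rule has_sum_bounded_linear[OF c_bl Qsum[OF asum]])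
          then have "c n (Q a) = (\<Sum>\<^sub>\<infinity>n'\<in>N. c n (a n' *\<^sub>R n'))"
            by (simp add: infsumI)
          also have "\<dots> = (\<Sum>\<^sub>\<infinity>n'\<in>{n}. c n (a n' *\<^sub>R n'))"
            by (rule infsum_cong_neutral) (use nN in \<open>auto simp: linear_scale[OF c_lin] c_N\<close>)
          also have "\<dots> = a n" using nN by (simp add: linear_scale[OF c_lin] c_N)
          finally show ?thesis .
        qed
        then have "\<phi> (Q a) = a" using a0 by (auto simp: \<phi>_def)
        then show "a \<in> range \<phi>" by (rule range_eqI[OF sym])
      qed
    qed
  qed
  have add: "\<forall>x y. \<phi> (x + y) = (\<lambda>n. \<phi> x n + \<phi> y n)"
    by (auto simp: \<phi>_def linear_add[OF c_lin])
  have scal: "\<forall>r x. \<phi> (r *\<^sub>R x) = (\<lambda>n. r * \<phi> x n)"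
    by (auto simp: \<phi>_def linear_scale[OF c_lin])
  have up: "\<exists>C. \<forall>x. ell1_norm N (\<phi> x) \<le> C * norm x"
    using infN \<phi>_norm by metis
  have low: "\<exists>C. \<forall>x. norm x \<le> C * ell1_norm N (\<phi> x)"
  proof (intro exI allI)
    fix x
    have "norm x = norm (Q (\<phi> x))" using Q\<phi> by simp
    also have "\<dots> \<le> ell1_norm N (\<phi> x)" unfolding ell1_norm_def by (rule Qbound[OF \<phi>_summ])
    finally show "norm x \<le> 1 * ell1_norm N (\<phi> x)" by simp
  qed
  have ind: "\<forall>n\<in>N. \<phi> n = indicator {n}"
  proof
    fix n assume nN: "n \<in> N"
    show "\<phi> n = indicator {n}"
    proof
      fix n'
      show "\<phi> n n' = indicator {n} n'"
        using c_N[OF nN, of n'] nN by (auto simp: \<phi>_def indicator_def)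
    qed
  qed
  show ?thesis using bij add scal up low ind by blast
qed

end
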